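(* For every target rate $r>0$, $P_{\rm r}>0$ and $\mathcal C_x\in[0,1)$, \[ \mathcal P_{\rm E-E}(P_{\rm r},\mathcal C_x)\ge 1-\frac{e^{-\Psi_r(\mathcal C_x)\left(\frac1{P_{\rm s}\theta_{\rm sr}}+\frac1{P_{\rm r}\theta_{\rm rd}(1-\mathcal C_x^2)}\right)}}{\Gamma(m_{\rm sd})\Gamma(m_{\rm rr})\theta_{\rm sd}^{m_{\rm sd}}\theta_{\rm rr}^{m_{\rm rr}}}\sum_{m=0}^{m_{\rm sr}-1}\sum_{m'=0}^{m_{\rm rd}-1}\sum_{k=0}^m\sum_{k'=0}^{m'}\binom mk\binom{m'}{k'} \frac{\dfrac{P_{\rm r}^{k-m'}\Gamma(k+m_{\rm rr})\Gamma(k'+m_{\rm sd})\Psi_r(\mathcal C_x)^{m+m'}}{P_{\rm s}^{m-k'}\Gamma(m+1)\Gamma(m'+1)\theta_{\rm sr}^m\theta_{\rm rd}^{m'}(1-\mathcal C_x^2)^{m'}}}{\left(\frac{P_{\rm r}\Psi_r(\mathcal C_x)}{P_{\rm s}\theta_{\rm sr}}+\frac1{\theta_{\rm rr}}\right)^{k+m_{\rm rr}}\left(\frac{P_{\rm s}\Psi_r(\mathcal C_x)}{P_{\rm r}\theta_{\rm rd}(1-\mathcal C_x^2)}+\frac1{\theta_{\rm sd}}\right)^{k'+m_{\rm sd}}}=:\mathcal P^{\rm LB}_{\rm E-E}(P_{\rm r},\mathcal C_x). \]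
   Context: Let $P_{\rm s}>0$, $P_{\rm r}>0$ be the source and relay transmit powers. For links $ij\in\{\mathrm{sr},\mathrm{rr},\mathrm{rd},\mathrm{sd}\}$ let $g_{ij}$ be mutually independent random channel gains, $g_{ij}$ gamma distributed with integer shape parameter $m_{ij}\ge1$ and scale $\theta_{ij}=\pi_{ij}/m_{ij}$, where $\pi_{ij}=\mathbb E[g_{ij}]>0$; i.e. $g_{ij}$ has density $x^{m_{ij}-1}e^{-x/\theta_{ij}}/(\Gamma(m_{ij})\theta_{ij}^{m_{ij}})$ for $x\ge0$. For a circularity coefficient $\mathcal C_x\in[0,1)$ define $R_{\rm sr}(P_{\rm r},\mathcal C_x)=\tfrac12\log_2\frac{(P_{\rm s}g_{\rm sr}+P_{\rm r}g_{\rm rr}+1)^2-(P_{\rm r}g_{\rm rr}\mathcal C_x)^2}{(P_{\rm r}g_{\rm rr}+1)^2-(P_{\rm r}g_{\rm rr}\mathcal C_x)^2}$ and $R_{\rm rd}(P_{\rm r},\mathcal C_x)=\tfrac12\log_2\frac{(P_{\rm r}g_{\rm rd}+P_{\rm s}g_{\rm sd}+1)^2-(P_{\rm r}g_{\rm rd}\mathcal C_x)^2}{(P_{\rm s}g_{\rm sd}+1)^2}$. For a target rate $r>0$ put $\gamma=2^{2r}-1$, $\eta=2^r-1$ and $\Psi_r(x)=\sqrt{1+\gamma(1-x^2)}-1$. The outage probabilities are $\mathcal P_{\rm sr}=\mathbb P\{R_{\rm sr}<r\}$, $\mathcal P_{\rm rd}=\mathbb P\{R_{\rm rd}<r\}$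 and $\mathcal P_{\rm E-E}=\mathbb P\{\min(R_{\rm sr},R_{\rm rd})<r\}$. *)

theory Defs
  imports "HOL-Probability.Probability"
begin

datatype link = SR | RR | RD | SD

definition gamma_density :: "nat \<Rightarrow> real \<Rightarrow> real \<Rightarrow> real" where
  "gamma_density m \<theta> x =
     (if x \<ge> 0 then x ^ (m - 1) * exp (- x / \<theta>) / (Gamma (real m) * \<theta> ^ m) else 0)"

definition R_sr :: "real \<Rightarrow> real \<Rightarrow> real \<Rightarrow> real \<Rightarrow> real \<Rightarrow> real" where
  "R_sr Ps Pr C gsr grr =
     (1/2) * log 2 (((Ps * gsr + Pr * grr + 1)\<^sup>2 - (Pr * grr * C)\<^sup>2) /
                    ((Pr * grr + 1)\<^sup>2 - (Pr * grr * C)\<^sup>2))"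

definition R_rd :: "real \<Rightarrow> real \<Rightarrow> real \<Rightarrow> real \<Rightarrow> real \<Rightarrow> real" where
  "R_rd Ps Pr C grd gsd =
     (1/2) * log 2 (((Pr * grd + Ps * gsd + 1)\<^sup>2 - (Pr * grd * C)\<^sup>2) / (Ps * gsd + 1)\<^sup>2)"

definition gam :: "real \<Rightarrow> real" where
  "gam r = 2 powr (2 * r) - 1"

definition Psi :: "real \<Rightarrow> real \<Rightarrow> real" where
  "Psi r x = sqrt (1 + gam r * (1 - x\<^sup>2)) - 1"

definition P_LB :: "real \<Rightarrow> real \<Rightarrow> (link \<Rightarrow> nat) \<Rightarrow> (link \<Rightarrow> real) \<Rightarrow> real \<Rightarrow> real \<Rightarrow> real" where
  "P_LB r Ps m \<theta> Pr C =
    (let \<Psi> = Psi r C; D = 1 - C\<^sup>2 in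
     1 - exp (- \<Psi> * (1 / (Ps * \<theta> SR) + 1 / (Pr * \<theta> RD * D))) /
         (Gamma (real (m SD)) * Gamma (real (m RR)) * \<theta> SD ^ m SD * \<theta> RR ^ m RR) *
       (\<Sum>i<m SR. \<Sum>j<m RD. \<Sum>k\<le>i. \<Sum>k'\<le>j.
          real (i choose k) * real (j choose k') *
          ((Pr powr (real k - real j) * Gamma (real k + real (m RR)) *
              Gamma (real k' + real (m SD)) * \<Psi> ^ (i + j)) /
           (Ps powr (real i - real k') * Gamma (real i + 1) * Gamma (real j + 1) *
              \<theta> SR ^ i * \<theta> RD ^ j * D ^ j)) /
          ((Pr * \<Psi> / (Ps * \<theta> SR) + 1 / \<theta> RR) ^ (k + m RR) *
           (Ps * \<Psi> / (Pr * \<theta> RD * D) + 1 / \<theta> SD) ^ (k' + m SD))))"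

end

theory Submission
  imports Defs
begin

lemma gamma_erlang:
  assumes "1 \<le> m" "0 < \<theta>"
  shows "gamma_density m \<theta> x = erlang_density (m - 1) (1/\<theta>) x"
proof -
  obtain k where k: "m = Suc k" using assms(1) by (cases m) auto
  have G: "Gamma (real m) = fact k"
    using Gamma_fact[of k, where 'a=real] by (simp add: k add.commute)
  show ?thesis using assms(2)
    unfolding gamma_density_def erlang_density_def G
    by (auto simp: k power_one_over field_simps)
qed

lemma erlang_tail:
  assumes l: "0 < l" and t: "0 \<le> t"
  shows "(\<integral>\<^sup>+x. ennreal (erlang_density k l x) * indicator {t..} x \<partial>lborel)
     = ennreal (\<Sum>n\<le>k. (l*t)^n * exp (- l*t) / fact n)"
proof -
  interpret P: prob_space "density lborel (erlang_density k l)"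
    using prob_space_erlang_density[OF l] .
  have "(\<integral>\<^sup>+x. ennreal (erlang_density k l x) * indicator {t..} x \<partial>lborel)
      = (\<integral>\<^sup>+x. ennreal (erlang_density k l x) * indicator {t<..} x \<partial>lborel)"
    by (intro nn_integral_cong_AE, use AE_lborel_singleton[of t] in eventually_elim)
       (auto split: split_indicator)
  also have "\<dots> = emeasure (density lborel (erlang_density k l)) {t<..}"
    by (simp add: emeasure_density)
  also have "{t<..} = space (density lborel (erlang_density k l)) - {..t}" by auto
  also have "emeasure (density lborel (erlang_density k l)) \<dots> = 1 - emeasure (density lborel (erlang_density k l)) {..t}"
    using P.emeasure_space_1 by (subst emeasure_compl) auto
  also have "\<dots> = 1 - ennreal (erlang_CDF k l t)"
    using emeasure_erlang_density[OF l] by simp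
  also have "\<dots> = ennreal (\<Sum>n\<le>k. (l*t)^n * exp (- l*t) / fact n)"
  proof -
    have "0 \<le> erlang_CDF k l t" using l by simp
    then show ?thesis using t
      by (simp add: erlang_CDF_def ennreal_minus flip: ennreal_1)
  qed
  finally show ?thesis .
qed

lemma erlang_nonneg_pow:
  assumes "0 < l" "0 \<le> e" shows "0 \<le> erlang_density k l y * y ^ j * e"
  using assms by (cases "y < 0") (auto simp: erlang_density_def)

lemma alg1:
  fixes L l y P Q :: real assumes "0 < L"
  shows "l^Suc k * y^k * P / fact k * y^j * Q =
    (l^Suc k * fact (k+j) / (fact k * L^Suc (k+j))) * (L^Suc (k+j) * y^(k+j) * (P*Q) / fact (k+j))"
  using assms by (simp add: power_add field_simps)

lemma erlang_mom_exp:
  assumes l: "0 < l" and b: "0 \<le> b"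
  shows "(\<integral>\<^sup>+y. ennreal (erlang_density k l y * y^j * exp (- b*y)) \<partial>lborel)
     = ennreal (l^(Suc k) * fact (k+j) / (fact k * (l+b)^(Suc (k+j))))"
proof -
  define K where "K = l^(Suc k) * fact (k+j) / (fact k * (l+b)^(Suc (k+j)))"
  have K0: "0 \<le> K" using l b by (simp add: K_def)
  have pw: "erlang_density k l y * y^j * exp (- b*y) = K * erlang_density (k+j) (l+b) y" for y
  proof (cases "y < 0")
    case True then show ?thesis by (simp add: erlang_density_def)
  next
    case False
    have e: "exp ((- l - b)*y) = exp (- l*y) * exp (- b*y)"
      by (simp add: exp_add[symmetric] algebra_simps)
    have e1: "erlang_density (k+j) (l+b) y = (l+b)^(Suc (k+j)) * y^(k+j) * (exp (- l*y) * exp (- b*y)) / fact (k+j)"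
      using False by (simp add: erlang_density_def e del: minus_mult_left)
    have e2: "erlang_density k l y = l^(Suc k) * y^k * exp (- l*y) / fact k"
      using False by (simp add: erlang_density_def del: minus_mult_left)
    show ?thesis using l b
      unfolding K_def e1 e2
      using alg1[where L="l+b" and l=l and y=y and k=k and j=j and P="exp (- l*y)" and Q="exp (- b*y)"]
      by simp
  qed
  have "(\<integral>\<^sup>+y. ennreal (erlang_density k l y * y^j * exp (- b*y)) \<partial>lborel)
      = (\<integral>\<^sup>+y. ennreal K * ennreal (erlang_density (k+j) (l+b) y) \<partial>lborel)"
    unfolding pw using K0 by (simp add: ennreal_mult')
  also have "\<dots> = ennreal K * (\<integral>\<^sup>+y. ennreal (erlang_density (k+j) (l+b) y) \<partial>lborel)"
    by (rule nn_integral_cmult) simp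
  also have "(\<integral>\<^sup>+y. ennreal (erlang_density (k+j) (l+b) y) \<partial>lborel) = 1"
    using nn_integral_erlang_ith_moment[of "l+b" "k+j" 0] l b by simp
  finally show ?thesis by (simp add: K_def)
qed

lemma binom_expand:
  fixes l c d y :: real
  shows "(l*(c*(1+d*y)))^n * exp (- l*(c*(1+d*y))) / fact n
    = (\<Sum>j\<le>n. (exp (- l*c) * (l*c)^n / fact n * real (n choose j) * d^j) * (y^j * exp (- (l*c*d)*y)))"
proof -
  have bin: "(1+d*y)^n = (\<Sum>j\<le>n. real (n choose j) * d^j * y^j)"
    using binomial_ring[of "d*y" 1 n] by (simp add: add.commute power_mult_distrib mult.assoc)
  have e: "exp (- l*(c*(1+d*y))) = exp (- l*c) * exp (- (l*c*d)*y)"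
    by (simp add: exp_add[symmetric] algebra_simps)
  show ?thesis
    unfolding e power_mult_distrib bin
    by (simp add: sum_distrib_left sum_distrib_right sum_divide_distrib mult_ac)
qed

definition Efun :: "nat \<Rightarrow> real \<Rightarrow> nat \<Rightarrow> real \<Rightarrow> real \<Rightarrow> real \<Rightarrow> real" where
  "Efun k1 l1 k2 l2 c d = (\<Sum>n\<le>k1. \<Sum>j\<le>n.
     (exp (- l1*c) * (l1*c)^n / fact n * real (n choose j) * d^j) *
     (l2^(Suc k2) * fact (k2+j) / (fact k2 * (l2 + l1*c*d)^(Suc (k2+j)))))"

lemma generic:
  assumes P: "prob_space M"
    and X: "distributed M lborel X (\<lambda>x. ennreal (erlang_density k1 l1 x))"
    and Y: "distributed M lborel Y (\<lambda>x. ennreal (erlang_density k2 l2 x))"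
    and ind: "prob_space.indep_var M lborel X lborel Y"
    and l1: "0 < l1" and l2: "0 < l2" and c: "0 \<le> c" and d: "0 \<le> d"
  shows "emeasure M {\<omega>\<in>space M. c*(1+d*Y \<omega>) \<le> X \<omega>} = ennreal (Efun k1 l1 k2 l2 c d)"
proof -
  interpret prob_space M by fact
  let ?fX = "\<lambda>x. erlang_density k1 l1 x" and ?fY = "\<lambda>y. erlang_density k2 l2 y"
  define T where "T y = (\<Sum>n\<le>k1. (l1*(c*(1+d*y)))^n * exp (- l1*(c*(1+d*y))) / fact n)" for y
  define coef where "coef n j = exp (- l1*c) * (l1*c)^n / fact n * real (n choose j) * d^j" for n j
  have coef0: "0 \<le> coef n j" for n j using l1 c d by (simp add: coef_def)
  have J: "distributed M (lborel \<Otimes>\<^sub>M lborel) (\<lambda>\<omega>. (X \<omega>, Y \<omega>))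
      (\<lambda>(x,y). ennreal (?fX x) * ennreal (?fY y))"
    by (rule distributed_joint_indep[OF _ _ X Y ind]) (simp_all add: lborel.sigma_finite_measure_axioms)
  define S where "S = {p::real\<times>real. c*(1+d * snd p) \<le> fst p}"
  have "Measurable.pred (lborel \<Otimes>\<^sub>M lborel) (\<lambda>p::real\<times>real. c*(1+d * snd p) \<le> fst p)"
    by measurable
  then have Sm: "S \<in> sets (lborel \<Otimes>\<^sub>M lborel)"
    unfolding S_def pred_def by (simp add: space_pair_measure)
  have "{\<omega>\<in>space M. c*(1+d*Y \<omega>) \<le> X \<omega>} = (\<lambda>\<omega>. (X \<omega>, Y \<omega>)) -` S \<inter> space M"
    by (auto simp: S_def)
  then have "emeasure M {\<omega>\<in>space M. c*(1+d*Y \<omega>) \<le> X \<omega>}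
     = (\<integral>\<^sup>+p. (case p of (x,y) \<Rightarrow> ennreal (?fX x) * ennreal (?fY y)) * indicator S p \<partial>(lborel \<Otimes>\<^sub>M lborel))"
    using distributed_emeasure[OF J Sm] by simp
  also have "\<dots> = (\<integral>\<^sup>+y. \<integral>\<^sup>+x. (ennreal (?fX x) * ennreal (?fY y)) * indicator S (x,y) \<partial>lborel \<partial>lborel)"
  proof -
    have mf: "(\<lambda>p. (case p of (x,y) \<Rightarrow> ennreal (?fX x) * ennreal (?fY y)) * indicator S p)
        \<in> borel_measurable (lborel \<Otimes>\<^sub>M lborel)"
      using Sm by measurable
    show ?thesis by (subst lborel_pair.nn_integral_snd[OF mf, symmetric]) simp
  qed
  also have "\<dots> = (\<integral>\<^sup>+y. ennreal (?fY y * T y) \<partial>lborel)"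
  proof (rule nn_integral_cong)
    fix y :: real
    show "(\<integral>\<^sup>+x. (ennreal (?fX x) * ennreal (?fY y)) * indicator S (x,y) \<partial>lborel) = ennreal (?fY y * T y)"
    proof (cases "y < 0")
      case True then show ?thesis by (simp add: erlang_density_def)
    next
      case False
      have t: "0 \<le> c*(1+d*y)" using False c d by simp
      have "(\<integral>\<^sup>+x. (ennreal (?fX x) * ennreal (?fY y)) * indicator S (x,y) \<partial>lborel)
         = (\<integral>\<^sup>+x. ennreal (?fY y) * (ennreal (?fX x) * indicator {c*(1+d*y)..} x) \<partial>lborel)"
        by (intro nn_integral_cong) (auto simp: S_def mult.commute split: split_indicator)
      also have "\<dots> = ennreal (?fY y) * (\<integral>\<^sup>+x. ennreal (?fX x) * indicator {c*(1+d*y)..} x \<partial>lborel)"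
        by (rule nn_integral_cmult) simp
      also have "\<dots> = ennreal (?fY y) * ennreal (T y)"
        unfolding T_def using erlang_tail[OF l1 t, of k1] by simp
      also have "\<dots> = ennreal (?fY y * T y)"
        using l2 by (simp add: ennreal_mult')
      finally show ?thesis .
    qed
  qed
  also have "\<dots> = (\<integral>\<^sup>+y. (\<Sum>n\<le>k1. \<Sum>j\<le>n. ennreal (coef n j) *
        ennreal (?fY y * y^j * exp (- (l1*c*d)*y))) \<partial>lborel)"
  proof (rule nn_integral_cong)
    fix y :: real
    have "?fY y * T y = (\<Sum>n\<le>k1. \<Sum>j\<le>n. coef n j * (?fY y * y^j * exp (- (l1*c*d)*y)))"
      unfolding T_def binom_expand coef_def
      by (simp add: sum_distrib_left mult_ac)
    moreover have "0 \<le> coef n j * (?fY y * y^j * exp (- (l1*c*d)*y))" for n j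
      using coef0[of n j] erlang_nonneg_pow[OF l2, of "exp (- (l1*c*d)*y)" k2 y j, simplified] by simp
    ultimately show "ennreal (?fY y * T y) = (\<Sum>n\<le>k1. \<Sum>j\<le>n. ennreal (coef n j) *
        ennreal (?fY y * y^j * exp (- (l1*c*d)*y)))"
      using coef0 erlang_nonneg_pow[OF l2]
      by (simp add: sum_nonneg ennreal_mult flip: sum_ennreal)
  qed
  also have "\<dots> = (\<Sum>n\<le>k1. \<Sum>j\<le>n. ennreal (coef n j) *
        (\<integral>\<^sup>+y. ennreal (?fY y * y^j * exp (- (l1*c*d)*y)) \<partial>lborel))"
    by (simp add: nn_integral_sum nn_integral_cmult)
  also have "\<dots> = (\<Sum>n\<le>k1. \<Sum>j\<le>n. ennreal (coef n j *
        (l2^(Suc k2) * fact (k2+j) / (fact k2 * (l2 + l1*c*d)^(Suc (k2+j))))))"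
  proof -
    have b0: "0 \<le> l1*c*d" using l1 c d by simp
    show ?thesis
      by (simp only: erlang_mom_exp[OF l2 b0]) (simp add: ennreal_mult'[symmetric] coef0)
  qed
  also have "\<dots> = ennreal (Efun k1 l1 k2 l2 c d)"
    unfolding Efun_def coef_def using l1 l2 c d
    by (simp add: sum_nonneg flip: sum_ennreal)
  finally show ?thesis .
qed

lemma gam_nonneg: "0 < r \<Longrightarrow> 0 \<le> gam r"
  unfolding gam_def using ge_one_powr_ge_zero[of 2 "2*r"] by simp

lemma r1: "(1 + G*(1-X))*Y = (1+G)*Y - G*(Y*X)" for G X Y :: real
  by (simp add: algebra_simps)

lemma r2: "(1+G)*(Y - Z) = (1+G)*Y - Z - G*Z" for G Y Z :: real
  by (simp add: algebra_simps)

lemma sr_imp: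
  assumes Ps: "0 < Ps" and Pr: "0 < Pr" and gs: "0 \<le> gsr" and gr: "0 \<le> grr"
    and C: "0 \<le> C" "C < 1" and r: "0 < r"
    and nr: "\<not> R_sr Ps Pr C gsr grr < r"
  shows "Psi r C / Ps * (1 + Pr*grr) \<le> gsr"
proof -
  define a where "a = Pr*grr"
  define s where "s = Ps*gsr"
  have a0: "0 \<le> a" and s0: "0 \<le> s" using Ps Pr gs gr by (auto simp: a_def s_def)
  have C2: "C^2 \<le> 1" using C by (simp add: power_le_one)
  have aC: "(a*C)^2 \<le> a^2" using C2 a0 by (simp add: power_mult_distrib mult_left_le)
  have den: "0 < (a+1)^2 - (a*C)^2"
  proof -
    have e: "(a+1)^2 = a^2 + 2*a + 1" by (simp add: power2_eq_square algebra_simps)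
    then have "a^2 < (a+1)^2" using a0 by linarith
    then show ?thesis using aC by simp
  qed
  have "(a+1)^2 \<le> (s+a+1)^2" by (rule power_mono) (use s0 a0 in auto)
  then have num: "(a+1)^2 - (a*C)^2 \<le> (s+a+1)^2 - (a*C)^2" by simp
  have "2*r \<le> log 2 (((s+a+1)^2 - (a*C)^2) / ((a+1)^2 - (a*C)^2))"
  proof -
    have "R_sr Ps Pr C gsr grr = 1/2 * log 2 (((s+a+1)^2 - (a*C)^2) / ((a+1)^2 - (a*C)^2))"
      unfolding R_sr_def a_def s_def by simp
    then show ?thesis using nr by simp
  qed
  then have "2 powr (2*r) \<le> ((s+a+1)^2 - (a*C)^2) / ((a+1)^2 - (a*C)^2)"
    using den num by (subst (asm) le_log_iff) auto
  then have key: "(1 + gam r) * ((a+1)^2 - (a*C)^2) \<le> (s+a+1)^2 - (a*C)^2"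
    using den by (simp add: gam_def pos_le_divide_eq)
  have g0: "0 \<le> gam r" using gam_nonneg[OF r] .
  define q where "q = sqrt (1 + gam r * (1 - C^2))"
  have q2: "q^2 = 1 + gam r * (1 - C^2)" unfolding q_def using g0 C2 by simp
  have q0: "0 \<le> q" unfolding q_def using g0 C2 by simp
  have "a^2 \<le> (a+1)^2" using a0 by (intro power_mono) auto
  then have "a^2 * C^2 \<le> (a+1)^2 * C^2" by (rule mult_right_mono) simp
  then have "gam r * (a^2 * C^2) \<le> gam r * ((a+1)^2 * C^2)"
    using g0 by (rule mult_left_mono)
  moreover have "(q*(a+1))^2 = (1 + gam r)*(a+1)^2 - gam r * ((a+1)^2 * C^2)"
  proof -
    have "(q*(a+1))^2 = q^2 * (a+1)^2" by (rule power_mult_distrib)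
    also have "\<dots> = (1 + gam r * (1 - C^2)) * (a+1)^2" by (simp only: q2)
    also have "\<dots> = (1 + gam r)*(a+1)^2 - gam r * ((a+1)^2 * C^2)" by (fact r1[of "gam r" "C^2" "(a+1)^2"])
    finally show ?thesis .
  qed
  moreover have "gam r * (a*C)^2 = gam r * (a^2 * C^2)" by (simp only: power_mult_distrib)
  moreover have "(1 + gam r) * ((a+1)^2 - (a*C)^2) = (1 + gam r)*(a+1)^2 - (a*C)^2 - gam r * (a*C)^2"
    by (rule r2)
  ultimately have "(q*(a+1))^2 \<le> (s+a+1)^2"
    using key by linarith
  then have "q*(a+1) \<le> s+a+1"
    by (rule power2_le_imp_le) (use s0 a0 in linarith)
  then have "(q - 1)*(a+1) \<le> s" using left_diff_distrib[of q 1 "a+1"] by (simp only: mult_1)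
  moreover have "Psi r C * (1 + Pr*grr) = (q - 1)*(a+1)"
    unfolding Psi_def q_def a_def by (simp only: add.commute)
  ultimately have *: "Psi r C * (1 + Pr*grr) \<le> Ps * gsr" unfolding s_def by simp
  have "Psi r C / Ps * (1 + Pr*grr) = (Psi r C * (1 + Pr*grr)) / Ps" by simp
  also have "\<dots> \<le> gsr" using * Ps by (simp add: pos_divide_le_eq mult.commute)
  finally show ?thesis .
qed

lemma rd_imp:
  assumes Ps: "0 < Ps" and Pr: "0 < Pr" and gd: "0 \<le> grd" and gq: "0 \<le> gsd"
    and C: "0 \<le> C" "C < 1" and r: "0 < r"
    and nr: "\<not> R_rd Ps Pr C grd gsd < r"
  shows "Psi r C / (Pr * (1 - C^2)) * (1 + Ps*gsd) \<le> grd"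
proof -
  define b where "b = Pr*grd"
  define u where "u = Ps*gsd + 1"
  define D where "D = 1 - C^2"
  have b0: "0 \<le> b" and u1: "1 \<le> u" using Ps Pr gd gq by (auto simp: b_def u_def)
  have C2: "C^2 < 1" using C by (simp add: power_less_one_iff abs_square_less_1)
  have D0: "0 < D" using C2 by (simp add: D_def)
  have bC: "(b*C)^2 \<le> b^2" using C2 b0 by (simp add: power_mult_distrib mult_left_le)
  have num: "0 < (b+u)^2 - (b*C)^2"
  proof -
    have e: "(b+u)^2 = b^2 + 2*(b*u) + u*u" by (simp add: power2_eq_square algebra_simps)
    have "0 < u*u" "0 \<le> b*u" using b0 u1 by auto
    then have "b^2 < (b+u)^2" unfolding e by linarith
    then show ?thesis using bC by simp
  qed
  have den: "0 < u^2" using u1 by simp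
  have "2*r \<le> log 2 (((b+u)^2 - (b*C)^2) / u^2)"
  proof -
    have "R_rd Ps Pr C grd gsd = 1/2 * log 2 (((b+u)^2 - (b*C)^2) / u^2)"
      unfolding R_rd_def b_def u_def by (simp add: add.assoc)
    then show ?thesis using nr by simp
  qed
  then have "2 powr (2*r) \<le> ((b+u)^2 - (b*C)^2) / u^2"
    using den num by (subst (asm) le_log_iff) auto
  then have key: "(1 + gam r) * u^2 \<le> (b+u)^2 - (b*C)^2"
    using den by (simp add: gam_def pos_le_divide_eq)
  then have key2: "gam r * u^2 \<le> D*b^2 + 2*b*u"
    by (simp add: D_def power2_eq_square algebra_simps)
  have g0: "0 \<le> gam r" using gam_nonneg[OF r] .
  define q where "q = sqrt (1 + gam r * D)"
  have q2: "q^2 = 1 + gam r * D" unfolding q_def using g0 D0 by simp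
  have q0: "0 \<le> q" unfolding q_def using g0 D0 by simp
  have "q*u \<le> b*D + u"
  proof (rule power2_le_imp_le)
    have "(q*u)^2 = u^2 + D * (gam r * u^2)" by (simp add: power_mult_distrib q2 algebra_simps)
    also have "\<dots> \<le> u^2 + D * (D*b^2 + 2*b*u)" using key2 D0 by simp
    also have "\<dots> = (b*D + u)^2" by (simp add: power2_eq_square algebra_simps)
    finally show "(q*u)^2 \<le> (b*D + u)^2" .
    show "0 \<le> b*D + u" using b0 D0 u1 by simp
  qed
  then have "(q - 1)*u \<le> b*D" by (simp add: algebra_simps)
  moreover have "Psi r C = q - 1" by (simp add: Psi_def q_def D_def)
  ultimately have "Psi r C * (1 + Ps*gsd) \<le> Pr * (1 - C^2) * grd"
    by (simp add: b_def u_def D_def add.commute mult_ac)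
  then show ?thesis using Pr D0 unfolding D_def by (simp add: pos_divide_le_eq mult_ac)
qed

lemma Gamma_nat1: "Gamma (real (Suc m)) = fact m"
  using Gamma_fact[of m, where 'a=real] by (simp add: add.commute)
lemma Gamma_nat2: "Gamma (real n + real (Suc m)) = fact (n+m)"
  using Gamma_fact[of "n+m", where 'a=real] by (simp add: add_ac)
lemma Gamma_nat3: "Gamma (real n + 1) = fact n"
  using Gamma_fact[of n, where 'a=real] by (simp add: add_ac)

lemma term_eq:
  fixes \<Psi> Ps Pr D ts tr td tq :: real
  assumes pos: "0 < \<Psi>" "0 < Ps" "0 < Pr" "0 < D" "0 < ts" "0 < tr" "0 < td" "0 < tq"
  shows "exp (- \<Psi> * (1 / (Ps * ts) + 1 / (Pr * td * D))) /
     (Gamma (real (Suc b)) * Gamma (real (Suc a)) * tq ^ Suc b * tr ^ Suc a) *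
   (real (i choose k) * real (j choose k') *
          ((Pr powr (real k - real j) * Gamma (real k + real (Suc a)) *
              Gamma (real k' + real (Suc b)) * \<Psi> ^ (i + j)) /
           (Ps powr (real i - real k') * Gamma (real i + 1) * Gamma (real j + 1) *
              ts ^ i * td ^ j * D ^ j)) /
          ((Pr * \<Psi> / (Ps * ts) + 1 / tr) ^ (k + Suc a) *
           (Ps * \<Psi> / (Pr * td * D) + 1 / tq) ^ (k' + Suc b)))
 = ((exp (- (1/ts)*(\<Psi>/Ps)) * ((1/ts)*(\<Psi>/Ps))^i / fact i * real (i choose k) * Pr^k) *
     ((1/tr)^(Suc a) * fact (a+k) / (fact a * ((1/tr) + (1/ts)*(\<Psi>/Ps)*Pr)^(Suc (a+k))))) *
   ((exp (- (1/td)*(\<Psi>/(Pr*D))) * ((1/td)*(\<Psi>/(Pr*D)))^j / fact j * real (j choose k') * Ps^k') *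
     ((1/tq)^(Suc b) * fact (b+k') / (fact b * ((1/tq) + (1/td)*(\<Psi>/(Pr*D))*Ps)^(Suc (b+k')))))"
proof -
  define B1 where "B1 = 1/tr + (1/ts)*(\<Psi>/Ps)*Pr"
  define B2 where "B2 = 1/tq + (1/td)*(\<Psi>/(Pr*D))*Ps"
  have B1: "Pr * \<Psi> / (Ps * ts) + 1 / tr = B1" unfolding B1_def using pos by (simp add: field_simps)
  have B2: "Ps * \<Psi> / (Pr * td * D) + 1 / tq = B2" unfolding B2_def using pos by (simp add: field_simps)
  have B1p: "0 < B1" unfolding B1_def using pos by (intro add_pos_pos) simp_all
  have B2p: "0 < B2" unfolding B2_def using pos by (intro add_pos_pos) simp_all
  define E1 where "E1 = exp (- (1/ts)*(\<Psi>/Ps))"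
  define E2 where "E2 = exp (- (1/td)*(\<Psi>/(Pr*D)))"
  have E: "exp (- \<Psi> * (1 / (Ps * ts) + 1 / (Pr * td * D))) = E1 * E2"
    unfolding E1_def E2_def by (simp add: exp_add[symmetric] field_simps)
  have E1p: "0 < E1" "0 < E2" unfolding E1_def E2_def by simp_all
  have pw1: "Pr powr (real k - real j) = Pr^k / Pr^j" using pos by (simp add: powr_diff powr_realpow)
  have pw2: "Ps powr (real i - real k') = Ps^i / Ps^k'" using pos by (simp add: powr_diff powr_realpow)
  have s1: "k + Suc a = Suc (a+k)" "k' + Suc b = Suc (b+k')" by simp_all
  show ?thesis
    unfolding B1 B2 E pw1 pw2 Gamma_nat1 Gamma_nat2 Gamma_nat3 B1_def[symmetric] B2_def[symmetric]
      E1_def[symmetric] E2_def[symmetric] s1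
    using pos B1p B2p E1p
    by (simp add: field_simps power_divide power_mult_distrib power_add add.commute)
qed

lemma Efun_nonneg:
  assumes "0 < l1" "0 < l2" "0 \<le> c" "0 \<le> d"
  shows "0 \<le> Efun k1 l1 k2 l2 c d"
proof -
  have "0 < l2 + l1*c*d" using assms by (intro add_pos_nonneg) auto
  then show ?thesis unfolding Efun_def using assms
    by (intro sum_nonneg mult_nonneg_nonneg divide_nonneg_nonneg) auto
qed

theorem theorem3:
  fixes M :: "'a measure" and g :: "link \<Rightarrow> 'a \<Rightarrow> real"
    and m :: "link \<Rightarrow> nat" and \<pi> \<theta> :: "link \<Rightarrow> real"
    and Ps Pr C r :: real
  assumes "prob_space M"
    and "\<And>ij. m ij \<ge> 1"
    and "\<And>ij. \<pi> ij > 0"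
    and "\<And>ij. \<theta> ij = \<pi> ij / real (m ij)"
    and "prob_space.indep_vars M (\<lambda>_. borel) g UNIV"
    and "\<And>ij. distributed M lborel (g ij) (\<lambda>x. ennreal (gamma_density (m ij) (\<theta> ij) x))"
    and "Ps > 0" and "Pr > 0" and "r > 0" and "0 \<le> C" and "C < 1"
  shows "measure M {\<omega> \<in> space M.
            min (R_sr Ps Pr C (g SR \<omega>) (g RR \<omega>)) (R_rd Ps Pr C (g RD \<omega>) (g SD \<omega>)) < r}
         \<ge> P_LB r Ps m \<theta> Pr C"
proof -
  note P = assms(1) and m1 = assms(2) and pi = assms(3) and th = assms(4) and ind = assms(5)
    and dist = assms(6) and Ps = assms(7) and Pr = assms(8) and r = assms(9) and C0 = assms(10)
    and C1 = assms(11)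
  interpret prob_space M by (rule P)
  have thp: "0 < \<theta> ij" for ij using th[of ij] pi[of ij] m1[of ij] by simp
  define k where "k ij = m ij - 1" for ij
  have mk: "m ij = Suc (k ij)" for ij using m1[of ij] by (simp add: k_def)
  have distE: "distributed M lborel (g ij) (\<lambda>x. ennreal (erlang_density (k ij) (1/\<theta> ij) x))" for ij
  proof -
    have "(\<lambda>x. ennreal (gamma_density (m ij) (\<theta> ij) x)) = (\<lambda>x. ennreal (erlang_density (k ij) (1/\<theta> ij) x))"
      using gamma_erlang[OF m1 thp] by (simp add: k_def)
    then show ?thesis using dist[of ij] by simp
  qed
  have meas[measurable]: "g ij \<in> borel_measurable M" for ij
    using distributed_measurable[OF dist[of ij]] by (simp add: measurable_lborel1)
  have indVar: "indep_var lborel (g a) lborel (g b)" if "a \<noteq> b" for a b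
  proof -
    have "indep_var (PiM {a} (\<lambda>_. borel)) (\<lambda>\<omega>. restrict (\<lambda>i. g i \<omega>) {a})
                    (PiM {b} (\<lambda>_. borel)) (\<lambda>\<omega>. restrict (\<lambda>i. g i \<omega>) {b})"
      using that by (intro indep_var_restrict[OF ind]) auto
    moreover have "(\<lambda>f. f a) \<in> measurable (PiM {a} (\<lambda>_. borel)) lborel"
      unfolding measurable_lborel1 by (rule measurable_component_singleton) simp
    moreover have "(\<lambda>f. f b) \<in> measurable (PiM {b} (\<lambda>_. borel)) lborel"
      unfolding measurable_lborel1 by (rule measurable_component_singleton) simp
    ultimately have "indep_var lborel ((\<lambda>f. f a) \<circ> (\<lambda>\<omega>. restrict (\<lambda>i. g i \<omega>) {a}))
                               lborel ((\<lambda>f. f b) \<circ> (\<lambda>\<omega>. restrict (\<lambda>i. g i \<omega>) {b}))"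
      by (rule indep_var_compose)
    moreover have "((\<lambda>f. f a) \<circ> (\<lambda>\<omega>. restrict (\<lambda>i. g i \<omega>) {a})) = g a" by (auto simp: fun_eq_iff)
    moreover have "((\<lambda>f. f b) \<circ> (\<lambda>\<omega>. restrict (\<lambda>i. g i \<omega>) {b})) = g b" by (auto simp: fun_eq_iff)
    ultimately show ?thesis by simp
  qed
  have indPair: "indep_var (lborel \<Otimes>\<^sub>M lborel) (\<lambda>\<omega>. (g SR \<omega>, g RR \<omega>))
                           (lborel \<Otimes>\<^sub>M lborel) (\<lambda>\<omega>. (g RD \<omega>, g SD \<omega>))"
  proof -
    have "indep_var (PiM {SR,RR} (\<lambda>_. borel)) (\<lambda>\<omega>. restrict (\<lambda>i. g i \<omega>) {SR,RR})
                    (PiM {RD,SD} (\<lambda>_. borel)) (\<lambda>\<omega>. restrict (\<lambda>i. g i \<omega>) {RD,SD})"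
      by (intro indep_var_restrict[OF ind]) auto
    moreover have "(\<lambda>f. (f SR, f RR)) \<in> measurable (PiM {SR,RR} (\<lambda>_. borel)) (lborel \<Otimes>\<^sub>M lborel)"
      by (intro measurable_Pair; unfold measurable_lborel1; rule measurable_component_singleton) simp_all
    moreover have "(\<lambda>f. (f RD, f SD)) \<in> measurable (PiM {RD,SD} (\<lambda>_. borel)) (lborel \<Otimes>\<^sub>M lborel)"
      by (intro measurable_Pair; unfold measurable_lborel1; rule measurable_component_singleton) simp_all
    ultimately have "indep_var (lborel \<Otimes>\<^sub>M lborel) ((\<lambda>f. (f SR, f RR)) \<circ> (\<lambda>\<omega>. restrict (\<lambda>i. g i \<omega>) {SR,RR}))
                               (lborel \<Otimes>\<^sub>M lborel) ((\<lambda>f. (f RD, f SD)) \<circ> (\<lambda>\<omega>. restrict (\<lambda>i. g i \<omega>) {RD,SD}))"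
      by (rule indep_var_compose)
    moreover have "((\<lambda>f. (f SR, f RR)) \<circ> (\<lambda>\<omega>. restrict (\<lambda>i. g i \<omega>) {SR,RR})) = (\<lambda>\<omega>. (g SR \<omega>, g RR \<omega>))"
      by (auto simp: fun_eq_iff)
    moreover have "((\<lambda>f. (f RD, f SD)) \<circ> (\<lambda>\<omega>. restrict (\<lambda>i. g i \<omega>) {RD,SD})) = (\<lambda>\<omega>. (g RD \<omega>, g SD \<omega>))"
      by (auto simp: fun_eq_iff)
    ultimately show ?thesis by simp
  qed
  define \<Psi> where "\<Psi> = Psi r C"
  define D where "D = 1 - C^2"
  have D0: "0 < D" unfolding D_def using C0 C1 by (simp add: power_less_one_iff abs_square_less_1)
  have gpos: "0 < gam r" unfolding gam_def using gr_one_powr[of 2 "2*r"] r by simp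
  have Psi0: "0 < \<Psi>"
  proof -
    have "1 < 1 + gam r * D" using gpos D0 by simp
    then have "1 < sqrt (1 + gam r * D)" by simp
    then show ?thesis unfolding \<Psi>_def Psi_def D_def by simp
  qed
  define cA where "cA = \<Psi> / Ps"
  define cB where "cB = \<Psi> / (Pr * D)"
  have cA0: "0 \<le> cA" and cB0: "0 \<le> cB" using Psi0 Ps Pr D0 by (simp_all add: cA_def cB_def)
  define EA where "EA = Efun (k SR) (1/\<theta> SR) (k RR) (1/\<theta> RR) cA Pr"
  define EB where "EB = Efun (k RD) (1/\<theta> RD) (k SD) (1/\<theta> SD) cB Ps"
  define Out where "Out = {\<omega> \<in> space M.
            min (R_sr Ps Pr C (g SR \<omega>) (g RR \<omega>)) (R_rd Ps Pr C (g RD \<omega>) (g SD \<omega>)) < r}"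
  define SA where "SA = {p::real\<times>real. cA*(1+Pr * snd p) \<le> fst p}"
  define SB where "SB = {p::real\<times>real. cB*(1+Ps * snd p) \<le> fst p}"
  have "Measurable.pred (lborel \<Otimes>\<^sub>M lborel) (\<lambda>p::real\<times>real. cA*(1+Pr * snd p) \<le> fst p)"
    by measurable
  then have SAm: "SA \<in> sets (lborel \<Otimes>\<^sub>M lborel)"
    unfolding SA_def pred_def by (simp add: space_pair_measure)
  have "Measurable.pred (lborel \<Otimes>\<^sub>M lborel) (\<lambda>p::real\<times>real. cB*(1+Ps * snd p) \<le> fst p)"
    by measurable
  then have SBm: "SB \<in> sets (lborel \<Otimes>\<^sub>M lborel)"
    unfolding SB_def pred_def by (simp add: space_pair_measure)
  define AB where "AB = (\<lambda>\<omega>. ((g SR \<omega>, g RR \<omega>), (g RD \<omega>, g SD \<omega>))) -` (SA \<times> SB) \<inter> space M"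
  have ABeq: "AB = {\<omega>\<in>space M. cA*(1+Pr*g RR \<omega>) \<le> g SR \<omega> \<and> cB*(1+Ps*g SD \<omega>) \<le> g RD \<omega>}"
    by (auto simp: AB_def SA_def SB_def)
  have ABm: "AB \<in> events" unfolding ABeq by measurable
  have Outm: "Out \<in> events" unfolding Out_def R_sr_def R_rd_def by measurable
  have probA: "prob ((\<lambda>\<omega>. (g SR \<omega>, g RR \<omega>)) -` SA \<inter> space M) = EA"
  proof -
    have "emeasure M {\<omega>\<in>space M. cA*(1+Pr*g RR \<omega>) \<le> g SR \<omega>} = ennreal EA"
      unfolding EA_def using thp
      by (intro generic[OF P distE distE indVar]) (auto simp: cA0 Pr less_imp_le)
    moreover have "{\<omega>\<in>space M. cA*(1+Pr*g RR \<omega>) \<le> g SR \<omega>} = (\<lambda>\<omega>. (g SR \<omega>, g RR \<omega>)) -` SA \<inter> space M"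
      by (auto simp: SA_def)
    moreover have "0 \<le> EA" unfolding EA_def using thp cA0 Pr by (intro Efun_nonneg) auto
    ultimately show ?thesis by (simp add: emeasure_eq_measure)
  qed
  have probB: "prob ((\<lambda>\<omega>. (g RD \<omega>, g SD \<omega>)) -` SB \<inter> space M) = EB"
  proof -
    have "emeasure M {\<omega>\<in>space M. cB*(1+Ps*g SD \<omega>) \<le> g RD \<omega>} = ennreal EB"
      unfolding EB_def using thp
      by (intro generic[OF P distE distE indVar]) (auto simp: cB0 Ps less_imp_le)
    moreover have "{\<omega>\<in>space M. cB*(1+Ps*g SD \<omega>) \<le> g RD \<omega>} = (\<lambda>\<omega>. (g RD \<omega>, g SD \<omega>)) -` SB \<inter> space M"
      by (auto simp: SB_def)
    moreover have "0 \<le> EB" unfolding EB_def using thp cB0 Ps by (intro Efun_nonneg) auto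
    ultimately show ?thesis by (simp add: emeasure_eq_measure)
  qed
  have probAB: "prob AB = EA * EB"
    unfolding AB_def using indep_varD[OF indPair SAm SBm] probA probB by simp
  have nn: "AE \<omega> in M. 0 \<le> g ij \<omega>" for ij
  proof -
    have "Measurable.pred lborel (\<lambda>x::real. 0 \<le> x)" by measurable
    moreover have "AE x in lborel. 0 < ennreal (gamma_density (m ij) (\<theta> ij) x) \<longrightarrow> 0 \<le> x"
      by (intro AE_I2) (auto simp: gamma_density_def)
    ultimately show ?thesis using distributed_AE2[OF dist[of ij]] by simp
  qed
  have "AE \<omega> in M. \<omega> \<in> space M - Out \<longrightarrow> \<omega> \<in> AB"
    using nn[of SR] nn[of RR] nn[of RD] nn[of SD]
  proof eventually_elim
    case (elim \<omega>)
    show ?case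
    proof
      assume w: "\<omega> \<in> space M - Out"
      then have n1: "\<not> R_sr Ps Pr C (g SR \<omega>) (g RR \<omega>) < r" and n2: "\<not> R_rd Ps Pr C (g RD \<omega>) (g SD \<omega>) < r"
        by (auto simp: Out_def)
      have "cA*(1+Pr*g RR \<omega>) \<le> g SR \<omega>"
        using sr_imp[OF Ps Pr _ _ C0 C1 r n1] elim by (simp add: cA_def \<Psi>_def)
      moreover have "cB*(1+Ps*g SD \<omega>) \<le> g RD \<omega>"
        using rd_imp[OF Ps Pr _ _ C0 C1 r n2] elim by (simp add: cB_def \<Psi>_def D_def)
      ultimately show "\<omega> \<in> AB" using w by (simp add: ABeq)
    qed
  qed
  then have "prob (space M - Out) \<le> prob AB"
    by (rule finite_measure_mono_AE) (rule ABm)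
  then have low: "1 - EA * EB \<le> prob Out"
    using prob_compl[OF Outm] probAB by simp
  have "P_LB r Ps m \<theta> Pr C = 1 - EA * EB"
  proof -
    have EAB: "EA * EB = (\<Sum>i\<le>k SR. \<Sum>j\<le>k RD. \<Sum>kk\<le>i. \<Sum>kk'\<le>j.
       ((exp (- (1/\<theta> SR)*(\<Psi>/Ps)) * ((1/\<theta> SR)*(\<Psi>/Ps))^i / fact i * real (i choose kk) * Pr^kk) *
        ((1/\<theta> RR)^(Suc (k RR)) * fact (k RR+kk) / (fact (k RR) * ((1/\<theta> RR) + (1/\<theta> SR)*(\<Psi>/Ps)*Pr)^(Suc (k RR+kk))))) *
       ((exp (- (1/\<theta> RD)*(\<Psi>/(Pr*D))) * ((1/\<theta> RD)*(\<Psi>/(Pr*D)))^j / fact j * real (j choose kk') * Ps^kk') *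
        ((1/\<theta> SD)^(Suc (k SD)) * fact (k SD+kk') / (fact (k SD) * ((1/\<theta> SD) + (1/\<theta> RD)*(\<Psi>/(Pr*D))*Ps)^(Suc (k SD+kk'))))))"
      unfolding EA_def EB_def Efun_def cA_def cB_def by (simp only: sum_product)
    show ?thesis
      unfolding P_LB_def Let_def \<Psi>_def[symmetric] D_def[symmetric] mk lessThan_Suc_atMost EAB
      apply (simp only: sum_distrib_left)
      apply (intro arg_cong[where f="\<lambda>x. 1 - x"] sum.cong refl)
      apply (rule term_eq)
      using Psi0 Ps Pr D0 thp by auto
  qed
  then show ?thesis using low unfolding Out_def by simp
qed

end
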